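(* Let $G$ be a finite group, $\mathbb{K}$ a field, and $\mathcal{H}=(\mathbb{K}G)^*$. Then $\mathcal{H}$ has enough cocommutative elements, i.e. $\mathcal{R}_{\mathcal{H}}^+\mathcal{H}=\mathcal{H}^+$, and $\mathcal{R}_{\mathcal{H}}$ is a semisimple algebra.
   Context: $(\mathbb{K}G)^*$ is the dual Hopf algebra of the group algebra: with $\{p_x\}_{x\in G}$ the dual basis of $G$, $p_xp_y=\delta_{x,y}p_x$, $\Delta(p_x)=\sum_{g\in G}p_{xg^{-1}}\otimes p_g$, $\varepsilon(p_x)=\delta_{x,1}$. For a Hopf algebra $\mathcal{H}$: $\mathcal{H}^+=\ker\varepsilon$, $\mathcal{R}_{\mathcal{H}}=\{r:\sum r_{(1)}\otimes r_{(2)}=\sum r_{(2)}\otimes r_{(1)}\}$, $\mathcal{R}_{\mathcal{H}}^+=\mathcal{R}_{\mathcal{H}}\cap\mathcal{H}^+$. *)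

theory Defs
  imports "HOL-Algebra.Group" "HOL-Library.Function_Algebras"
begin

text \<open>The dual Hopf algebra (KG)^* of the group algebra of a finite group G over a
field K, modelled as the K-valued functions on carrier G (extended by 0 outside
the carrier). Multiplication is pointwise (so p_x p_y = delta_{x,y} p_x).
H tensor H is modelled as the K-valued functions on carrier G x carrier G,
with (f tensor h)(u,v) = f u * h v.\<close>

definition dual_H :: "('g, 'b) monoid_scheme \<Rightarrow> ('g \<Rightarrow> 'k::field) set" where
  "dual_H G = {f. \<forall>y. y \<notin> carrier G \<longrightarrow> f y = 0}"

definition pb :: "'g \<Rightarrow> 'g \<Rightarrow> 'k::field" where
  "pb x = (\<lambda>y. if y = x then 1 else 0)"

definition tens :: "('g \<Rightarrow> 'k::field) \<Rightarrow> ('g \<Rightarrow> 'k) \<Rightarrow> ('g \<times> 'g \<Rightarrow> 'k)" where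
  "tens f h = (\<lambda>(u, v). f u * h v)"

definition smul :: "'k::field \<Rightarrow> ('a \<Rightarrow> 'k) \<Rightarrow> ('a \<Rightarrow> 'k)" where
  "smul c f = (\<lambda>z. c * f z)"

definition pmul :: "('a \<Rightarrow> 'k::field) \<Rightarrow> ('a \<Rightarrow> 'k) \<Rightarrow> ('a \<Rightarrow> 'k)" where
  "pmul f h = (\<lambda>z. f z * h z)"

definition unit_H :: "('g, 'b) monoid_scheme \<Rightarrow> 'g \<Rightarrow> 'k::field" where
  "unit_H G = (\<lambda>y. if y \<in> carrier G then 1 else 0)"

definition comult :: "('g, 'b) monoid_scheme \<Rightarrow> ('g \<Rightarrow> 'k::field) \<Rightarrow> ('g \<times> 'g \<Rightarrow> 'k)" where
  "comult G f = (\<Sum>x\<in>carrier G. smul (f x)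
      (\<Sum>g\<in>carrier G. tens (pb (x \<otimes>\<^bsub>G\<^esub> inv\<^bsub>G\<^esub> g)) (pb g)))"

text \<open>Counit: epsilon(p_x) = delta_{x,1}, i.e. epsilon(f) = f 1.\<close>
definition counit :: "('g, 'b) monoid_scheme \<Rightarrow> ('g \<Rightarrow> 'k::field) \<Rightarrow> 'k" where
  "counit G f = f \<one>\<^bsub>G\<^esub>"

definition flip_T :: "('g \<times> 'g \<Rightarrow> 'k) \<Rightarrow> ('g \<times> 'g \<Rightarrow> 'k)" where
  "flip_T T = (\<lambda>(u, v). T (v, u))"

definition H_plus :: "('g, 'b) monoid_scheme \<Rightarrow> ('g \<Rightarrow> 'k::field) set" where
  "H_plus G = {f \<in> dual_H G. counit G f = 0}"

definition R_H :: "('g, 'b) monoid_scheme \<Rightarrow> ('g \<Rightarrow> 'k::field) set" where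
  "R_H G = {r \<in> dual_H G. flip_T (comult G r) = comult G r}"

definition R_H_plus :: "('g, 'b) monoid_scheme \<Rightarrow> ('g \<Rightarrow> 'k::field) set" where
  "R_H_plus G = R_H G \<inter> H_plus G"

definition prod_sub :: "('a \<Rightarrow> 'k::field) set \<Rightarrow> ('a \<Rightarrow> 'k) set \<Rightarrow> ('a \<Rightarrow> 'k) set" where
  "prod_sub A B = {(\<Sum>i<n. pmul (a i) (b i)) | (n::nat) a b. (\<forall>i<n. a i \<in> A \<and> b i \<in> B)}"

definition subalgebra_H :: "('g, 'b) monoid_scheme \<Rightarrow> ('g \<Rightarrow> 'k::field) set \<Rightarrow> bool" where
  "subalgebra_H G A \<longleftrightarrow> A \<subseteq> dual_H G \<and> unit_H G \<in> A \<and> 0 \<in> A \<and>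
     (\<forall>x\<in>A. \<forall>y\<in>A. x + y \<in> A \<and> pmul x y \<in> A) \<and> (\<forall>c. \<forall>x\<in>A. smul c x \<in> A)"

definition left_ideal :: "('a \<Rightarrow> 'k::field) set \<Rightarrow> ('a \<Rightarrow> 'k) set \<Rightarrow> bool" where
  "left_ideal A I \<longleftrightarrow> I \<subseteq> A \<and> 0 \<in> I \<and> (\<forall>x\<in>I. \<forall>y\<in>I. x + y \<in> I) \<and>
     (\<forall>c. \<forall>x\<in>I. smul c x \<in> I) \<and> (\<forall>a\<in>A. \<forall>x\<in>I. pmul a x \<in> I)"

text \<open>Semisimple algebra: the regular left module is semisimple, i.e. every left
ideal is a direct summand (has a complementary left ideal).\<close>
definition semisimple_subalgebra :: "('g, 'b) monoid_scheme \<Rightarrow> ('g \<Rightarrow> 'k::field) set \<Rightarrow> bool" where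
  "semisimple_subalgebra G A \<longleftrightarrow> subalgebra_H G A \<and>
     (\<forall>I. left_ideal A I \<longrightarrow> (\<exists>J. left_ideal A J \<and> I \<inter> J = {0} \<and>
        {x + y | x y. x \<in> I \<and> y \<in> J} = A))"

end

theory Submission
  imports Defs
begin

lemma fsum_apply: "(\<Sum>i\<in>A. F i) y = (\<Sum>i\<in>A. F i y)"
  by (induction A rule: infinite_finite_induct) auto

lemma comult_apply:
  fixes G :: "('g,'b) monoid_scheme" (structure) and f :: "'g \<Rightarrow> 'k::field" 
  assumes G: "group G" and fin: "finite (carrier G)"
  shows "comult G f (u,v) = (if u \<in> carrier G \<and> v \<in> carrier G then f (u \<otimes>\<^bsub>G\<^esub> v) else 0)"
proof -
  interpret group G by (rule G)
  have "comult G f (u,v) = (\<Sum>x\<in>carrier G. f x * (\<Sum>g\<in>carrier G. pb (x \<otimes> inv g) u * pb g v))"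
    by (simp add: comult_def fsum_apply smul_def tens_def)
  also have "\<dots> = (\<Sum>x\<in>carrier G. f x * (if v \<in> carrier G then pb (x \<otimes> inv v) u else 0))"
  proof (rule sum.cong)
    fix x assume x: "x \<in> carrier G"
    have "(\<Sum>g\<in>carrier G. pb (x \<otimes> inv g) u * pb g v :: 'k) = (\<Sum>g\<in>carrier G. if g = v then pb (x \<otimes> inv v) u else 0)"
      by (rule sum.cong) (auto simp: pb_def)
    also have "\<dots> = (if v \<in> carrier G then pb (x \<otimes> inv v) u else 0)"
      by (simp add: fin sum.delta')
    finally show "f x * (\<Sum>g\<in>carrier G. pb (x \<otimes> inv g) u * pb g v) = f x * (if v \<in> carrier G then pb (x \<otimes> inv v) u else 0)" by (simp only:)
  qed simp
  also have "\<dots> = (\<Sum>x\<in>carrier G. if x = u \<otimes> v \<and> u \<in> carrier G \<and> v \<in> carrier G then f x else 0)"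
  proof (rule sum.cong)
    fix x assume x: "x \<in> carrier G"
    show "f x * (if v \<in> carrier G then pb (x \<otimes> inv v) u else 0) =
          (if x = u \<otimes> v \<and> u \<in> carrier G \<and> v \<in> carrier G then f x else 0)"
    proof (cases "v \<in> carrier G")
      case True
      have "(u = x \<otimes> inv v) = (x = u \<otimes> v \<and> u \<in> carrier G)"
        using x True by (metis inv_solve_right m_closed inv_closed)
      then show ?thesis using True by (auto simp: pb_def)
    qed simp
  qed simp
  also have "\<dots> = (if u \<in> carrier G \<and> v \<in> carrier G then f (u \<otimes> v) else 0)"
    by (auto simp: fin sum.delta' cong: if_cong)
  finally show ?thesis .
qed

lemma R_H_char:
  fixes G :: "('g,'b) monoid_scheme" (structure) and f :: "'g \<Rightarrow> 'k::field"
  assumes G: "group G" and fin: "finite (carrier G)"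
  shows "f \<in> R_H G \<longleftrightarrow> f \<in> dual_H G \<and> (\<forall>u\<in>carrier G. \<forall>v\<in>carrier G. f (u \<otimes> v) = f (v \<otimes> u))"
proof -
  have "flip_T (comult G f) = comult G f \<longleftrightarrow> (\<forall>u v. comult G f (v,u) = comult G f (u,v))"
    by (auto simp: flip_T_def fun_eq_iff)
  also have "\<dots> \<longleftrightarrow> (\<forall>u\<in>carrier G. \<forall>v\<in>carrier G. f (u \<otimes> v) = f (v \<otimes> u))"
    by (auto simp: comult_apply[OF G fin])
  finally show ?thesis by (auto simp: R_H_def)
qed

lemma dualD: "f \<in> dual_H G \<Longrightarrow> y \<notin> carrier G \<Longrightarrow> f y = 0"
  by (simp add: dual_H_def)

lemma main_aux:
  fixes G :: "('g, 'b) monoid_scheme" (structure)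
  assumes "group G" and "finite (carrier G)"
  shows "prod_sub (R_H_plus G) (dual_H G :: ('g \<Rightarrow> 'k::field) set) = H_plus G
         \<and> semisimple_subalgebra G (R_H G :: ('g \<Rightarrow> 'k) set)"
proof -
  interpret group G by (rule assms(1))
  note char = R_H_char[OF assms]
  define A where "A = (R_H G :: ('g \<Rightarrow> 'k) set)"
  have Achar: "\<And>f. f \<in> A \<longleftrightarrow> f \<in> dual_H G \<and> (\<forall>u\<in>carrier G. \<forall>v\<in>carrier G. f (u \<otimes> v) = f (v \<otimes> u))"
    unfolding A_def by (rule char)
  have P1: "prod_sub (R_H_plus G) (dual_H G :: ('g \<Rightarrow> 'k::field) set) = H_plus G"
  proof
    show "prod_sub (R_H_plus G) (dual_H G) \<subseteq> (H_plus G :: (_ \<Rightarrow> 'k) set)"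
    proof
      fix x :: "'g \<Rightarrow> 'k" assume "x \<in> prod_sub (R_H_plus G) (dual_H G)"
      then obtain n :: nat and a b where x: "x = (\<Sum>i<n. pmul (a i) (b i))"
        and ab: "\<forall>i<n. a i \<in> R_H_plus G \<and> b i \<in> dual_H G"
        unfolding prod_sub_def mem_Collect_eq by blast
      have "x \<in> dual_H G"
        using ab unfolding dual_H_def by (auto simp: x fsum_apply pmul_def)
      moreover have "x \<one> = 0"
        using ab by (auto simp: x fsum_apply pmul_def R_H_plus_def H_plus_def counit_def intro!: sum.neutral)
      ultimately show "x \<in> H_plus G" by (simp add: H_plus_def counit_def)
    qed
  next
    show "(H_plus G :: (_ \<Rightarrow> 'k) set) \<subseteq> prod_sub (R_H_plus G) (dual_H G)"
    proof
      fix f :: "'g \<Rightarrow> 'k" assume f: "f \<in> H_plus G"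
      define a :: "'g \<Rightarrow> 'k" where "a = (\<lambda>z. if z \<in> carrier G \<and> z \<noteq> \<one> then 1 else 0)"
      have "a \<in> R_H G"
        unfolding char
      proof
        show "a \<in> dual_H G" by (simp add: a_def dual_H_def)
        show "\<forall>u\<in>carrier G. \<forall>v\<in>carrier G. a (u \<otimes> v) = a (v \<otimes> u)"
          by (auto simp: a_def dest: inv_comm)
      qed
      hence aR: "a \<in> R_H_plus G" by (simp add: R_H_plus_def H_plus_def counit_def a_def R_H_def)
      have fd: "f \<in> dual_H G" and f1: "f \<one> = 0" using f by (auto simp: H_plus_def counit_def)
      have "pmul a f = f"
        using fd f1 by (auto simp: pmul_def a_def fun_eq_iff dual_H_def)
      hence fs: "f = (\<Sum>i<(1::nat). pmul ((\<lambda>_. a) i) ((\<lambda>_. f) i))" by (simp only: One_nat_def sum.lessThan_Suc lessThan_0 sum.empty add_0)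
      show "f \<in> prod_sub (R_H_plus G) (dual_H G)"
        unfolding prod_sub_def mem_Collect_eq
        by (rule exI[of _ "1::nat"], rule exI[of _ "\<lambda>_. a"], rule exI[of _ "\<lambda>_. f"]) (use aR fd fs in auto)
    qed
  qed
  have Adual: "A \<subseteq> dual_H G" using Achar by blast
  have Aunit: "unit_H G \<in> A" by (auto simp: Achar unit_H_def dual_H_def)
  have A0: "0 \<in> A" by (auto simp: Achar dual_H_def)
  have Aadd: "\<And>x y. x \<in> A \<Longrightarrow> y \<in> A \<Longrightarrow> x + y \<in> A" by (auto simp: Achar dual_H_def)
  have Amul: "\<And>x y. x \<in> A \<Longrightarrow> y \<in> A \<Longrightarrow> pmul x y \<in> A" by (auto simp: Achar dual_H_def pmul_def)
  have Asmul: "\<And>c x. x \<in> A \<Longrightarrow> smul c x \<in> A" by (auto simp: Achar dual_H_def smul_def)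
  have SA: "subalgebra_H G A"
    unfolding subalgebra_H_def by (simp add: Adual Aunit A0 Aadd Amul Asmul)
  have SS: "\<forall>I. left_ideal A I \<longrightarrow> (\<exists>J. left_ideal A J \<and> I \<inter> J = {0} \<and>
        {x + y | x y. x \<in> I \<and> y \<in> J} = A)"
  proof (intro allI impI)
    fix I assume LI: "left_ideal A I"
    have IA: "I \<subseteq> A" and I0: "0 \<in> I" and Iadd: "\<And>x y. x \<in> I \<Longrightarrow> y \<in> I \<Longrightarrow> x + y \<in> I"
      and Imul: "\<And>a x. a \<in> A \<Longrightarrow> x \<in> I \<Longrightarrow> pmul a x \<in> I"
      using LI unfolding left_ideal_def by blast+
    define S where "S = {y. \<exists>f\<in>I. f y \<noteq> 0}"
    have SG: "S \<subseteq> carrier G"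
      using IA Adual by (auto simp: S_def dual_H_def)
    have finS: "finite S" using SG assms(2) finite_subset by blast
    have claim: "finite T \<Longrightarrow> T \<subseteq> S \<Longrightarrow> \<exists>u\<in>I. \<forall>y\<in>T. u y \<noteq> 0" for T
    proof (induction T rule: finite_induct)
      case empty then show ?case using I0 by blast
    next
      case (insert y T)
      then obtain u where uI: "u \<in> I" and u: "\<forall>z\<in>T. u z \<noteq> 0" by blast
      from insert have "y \<in> S" by blast
      then obtain g where gI: "g \<in> I" and gy: "g y \<noteq> 0" by (auto simp: S_def)
      have yG: "y \<in> carrier G" using \<open>y \<in> S\<close> SG by blast
      define w :: "'g \<Rightarrow> 'k" where "w = (\<lambda>z. if z \<in> carrier G \<and> u z = 0 then 1 else 0)"
      have uA: "u \<in> A" using uI IA by blast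
      have wA: "w \<in> A"
        using uA by (auto simp: Achar w_def dual_H_def)
      have "u + pmul w g \<in> I" using Iadd[OF uI Imul[OF wA gI]] .
      moreover have "\<forall>z\<in>insert y T. (u + pmul w g) z \<noteq> 0"
      proof
        fix z assume z: "z \<in> insert y T"
        show "(u + pmul w g) z \<noteq> 0"
        proof (cases "u z = 0")
          case True
          then have "z = y" using z u by blast
          then show ?thesis using True yG gy by (simp add: w_def pmul_def)
        next
          case False
          then show ?thesis by (simp add: w_def pmul_def)
        qed
      qed
      ultimately show ?case by blast
    qed
    obtain u where uI: "u \<in> I" and u: "\<forall>y\<in>S. u y \<noteq> 0" using claim[OF finS] by blast
    have uA: "u \<in> A" using uI IA by blast
    define v :: "'g \<Rightarrow> 'k" where "v = (\<lambda>z. if z \<in> carrier G then inverse (u z) else 0)"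
    have vA: "v \<in> A" using uA by (auto simp: Achar v_def dual_H_def)
    define e where "e = pmul v u"
    have eI: "e \<in> I" unfolding e_def by (rule Imul[OF vA uI])
    have eA: "e \<in> A" using eI IA by blast
    have e_val: "\<And>z. e z = (if z \<in> S then 1 else 0)"
    proof -
      fix z
      show "e z = (if z \<in> S then 1 else 0)"
      proof (cases "z \<in> S")
        case True
        then show ?thesis using u SG by (auto simp: e_def pmul_def v_def)
      next
        case False
        then have "u z = 0" using uI by (auto simp: S_def)
        then show ?thesis using False by (simp add: e_def pmul_def)
      qed
    qed
    define J where "J = {f \<in> A. \<forall>y\<in>S. f y = 0}"
    have LJ: "left_ideal A J"
      unfolding left_ideal_def J_def
      using A0 Aadd Asmul Amul by (auto simp: smul_def pmul_def)
    have IJ: "I \<inter> J = {0}"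
    proof
      show "I \<inter> J \<subseteq> {0}"
      proof
        fix f assume f: "f \<in> I \<inter> J"
        have "f y = 0" for y
        proof (rule ccontr)
          assume "f y \<noteq> 0"
          then have "y \<in> S" using f by (auto simp: S_def)
          then show False using f \<open>f y \<noteq> 0\<close> by (auto simp: J_def)
        qed
        then show "f \<in> {0}" by (auto simp: fun_eq_iff)
      qed
      show "{0} \<subseteq> I \<inter> J" using I0 A0 by (auto simp: J_def)
    qed
    have sumA: "{x + y | x y. x \<in> I \<and> y \<in> J} = A"
    proof
      show "{x + y | x y. x \<in> I \<and> y \<in> J} \<subseteq> A"
        using IA Aadd by (auto simp: J_def)
      show "A \<subseteq> {x + y | x y. x \<in> I \<and> y \<in> J}"
      proof
        fix a assume aA: "a \<in> A"
        define x where "x = pmul a e"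
        define y where "y = (\<lambda>z. if z \<in> S then 0 else a z)"
        have xI: "x \<in> I" unfolding x_def by (rule Imul[OF aA eI])
        have "y \<in> A"
          unfolding Achar
        proof
          show "y \<in> dual_H G" using aA Adual by (auto simp: y_def dual_H_def)
          show "\<forall>u\<in>carrier G. \<forall>v\<in>carrier G. y (u \<otimes> v) = y (v \<otimes> u)"
          proof (intro ballI)
            fix p q assume p: "p \<in> carrier G" and q: "q \<in> carrier G"
            have "e (p \<otimes> q) = e (q \<otimes> p)" using eA p q by (auto simp: Achar)
            hence "(p \<otimes> q \<in> S) = (q \<otimes> p \<in> S)" by (simp add: e_val split: if_splits)
            moreover have "a (p \<otimes> q) = a (q \<otimes> p)" using aA p q by (auto simp: Achar)
            ultimately show "y (p \<otimes> q) = y (q \<otimes> p)" by (simp add: y_def)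
          qed
        qed
        hence yJ: "y \<in> J" by (auto simp: J_def y_def)
        have "a = x + y" by (auto simp: fun_eq_iff x_def y_def pmul_def e_val)
        then show "a \<in> {x + y | x y. x \<in> I \<and> y \<in> J}" using xI yJ by blast
      qed
    qed
    show "\<exists>J. left_ideal A J \<and> I \<inter> J = {0} \<and> {x + y | x y. x \<in> I \<and> y \<in> J} = A"
      using LJ IJ sumA by blast
  qed
  have "semisimple_subalgebra G A" unfolding semisimple_subalgebra_def using SA SS by (rule conjI)
  then show ?thesis using P1 by (simp add: A_def)
qed

theorem lemma2p30:
  fixes G :: "('g, 'b) monoid_scheme"
  assumes "group G" and "finite (carrier G)"
  shows "prod_sub (R_H_plus G) (dual_H G :: ('g \<Rightarrow> 'k::field) set) = H_plus G
         \<and> semisimple_subalgebra G (R_H G :: ('g \<Rightarrow> 'k) set)"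
  by (rule main_aux[OF assms])

end
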